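(* Let $X$ be a proper geodesic metric space, $Y$ a compact metric space, and $f:X\to Y$ a continuous map. Then $f$ extends to a continuous map $\bar f:h_0X\to Y$ if and only if $f$ is uniformly continuous.
   Context: The $C_0$ coarse structure on a metric space $(X,d)$ consists of all sets $E\subset X\times X$ such that for every $\epsilon>0$ there is a compact $K\subset X$ with $d(x,y)<\epsilon$ for all $(x,y)\in E\setminus(K\times K)$ (controlled sets). A bounded continuous $f:X\to\mathbb{C}$ is a Higson function if for every controlled set $E$ the function $(x,y)\mapsto f(x)-f(y)$ restricted to $E$ vanishes at infinity; $C_{h_0}(X)$ denotes the algebra of bounded continuous Higson functions. The $C_0$ Higson compactification $h_0X$ is the compactification of $X$ with $C(h_0X)=C_{h_0}(X)$ (i.e., exactly the bounded continuous functions on $X$ lying in $C_{h_0}(X)$ extend continuously to $h_0X$); $\nu_0X=h_0X\setminus X$ is the $C_0$ Higson corona. Uniformly continuous: there is a monotone $\omega$ with $\omega(t)\to0$ as $t\to0$ and $d(f(x),f(x'))\le\omega(d(x,x'))$. *)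

theory Defs
  imports "HOL-Analysis.Analysis"
begin

definition proper_metric :: "'a::metric_space itself \<Rightarrow> bool" where
  "proper_metric _ \<longleftrightarrow> (\<forall>(x::'a) r. compact (cball x r))"

definition geodesic_metric :: "'a::metric_space itself \<Rightarrow> bool" where
  "geodesic_metric _ \<longleftrightarrow> (\<forall>(x::'a) y. \<exists>g :: real \<Rightarrow> 'a.
      g 0 = x \<and> g (dist x y) = y \<and>
      (\<forall>s\<in>{0..dist x y}. \<forall>t\<in>{0..dist x y}. dist (g s) (g t) = \<bar>s - t\<bar>))"

definition C0_controlled :: "('a::metric_space \<times> 'a) set \<Rightarrow> bool" where
  "C0_controlled E \<longleftrightarrow> (\<forall>\<epsilon>>0. \<exists>K. compact K \<and>
      (\<forall>(x,y)\<in>E - (K \<times> K). dist x y < \<epsilon>))"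

definition vanishes_at_infinity_on :: "('a::metric_space \<times> 'a) set \<Rightarrow> ('a \<times> 'a \<Rightarrow> complex) \<Rightarrow> bool" where
  "vanishes_at_infinity_on E g \<longleftrightarrow> (\<forall>\<epsilon>>0. \<exists>C. compact C \<and>
      (\<forall>p\<in>E - C. norm (g p) < \<epsilon>))"

definition C_h0 :: "('a::metric_space \<Rightarrow> complex) set" where
  "C_h0 = {f. continuous_on UNIV f \<and> bounded (range f) \<and>
      (\<forall>E. C0_controlled E \<longrightarrow> vanishes_at_infinity_on E (\<lambda>(x,y). f x - f y))}"

definition is_C0_Higson_compactification :: "'c topology \<Rightarrow> ('a::metric_space \<Rightarrow> 'c) \<Rightarrow> bool" where
  "is_C0_Higson_compactification K e \<longleftrightarrow>
     compact_space K \<and> Hausdorff_space K \<and>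
     e ` UNIV \<subseteq> topspace K \<and>
     homeomorphic_map euclidean (subtopology K (range e)) e \<and>
     K closure_of (range e) = topspace K \<and>
     {g \<circ> e | g. continuous_map K euclidean (g :: 'c \<Rightarrow> complex)} = C_h0"

end

theory Submission
  imports Defs
begin


lemma dense_le:
  assumes "continuous_map K euclidean (p::'c\<Rightarrow>real)" "continuous_map K euclidean q"
    "\<And>x. p (e x) \<le> q (e x)" "K closure_of range e = topspace K" "range e \<subseteq> topspace K"
    "k \<in> topspace K"
  shows "p k \<le> q k"
proof -
  have c: "continuous_map K euclidean (\<lambda>k. q k - p k)"
    using assms(1,2) by (intro continuous_map_diff) auto
  have "closedin K {k \<in> topspace K. q k - p k \<in> {0..}}"
    by (rule closedin_continuous_map_preimage[OF c]) auto
  moreover have "range e \<subseteq> {k \<in> topspace K. q k - p k \<in> {0..}}"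
    using assms(3,5) by auto
  ultimately have "K closure_of range e \<subseteq> {k \<in> topspace K. q k - p k \<in> {0..}}"
    by (rule closure_of_minimal[rotated])
  thus ?thesis using assms(4,6) by auto
qed

lemma backward:
  fixes K :: "'c topology" and e :: "'a::metric_space \<Rightarrow> 'c"
    and Y :: "'b::metric_space set" and f :: "'a \<Rightarrow> 'b"
  assumes H: "is_C0_Higson_compactification K e"
    and Y: "compact Y" and fY: "f ` UNIV \<subseteq> Y" and fc: "continuous_on UNIV f"
    and uc: "uniformly_continuous_on UNIV f"
  shows "\<exists>F. continuous_map K (top_of_set Y) F \<and> (\<forall>x. F (e x) = f x)"
proof -
  have Ch: "{g \<circ> e | g. continuous_map K euclidean (g :: 'c \<Rightarrow> complex)} = C_h0"
    and cl: "K closure_of range e = topspace K" and rg: "range e \<subseteq> topspace K"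
    using H unfolding is_C0_Higson_compactification_def by auto
  obtain B where B: "\<And>z. z \<in> Y \<Longrightarrow> dist (f undefined) z \<le> B"
    using compact_imp_bounded[OF Y] bounded_any_center by metis
  have inC: "(\<lambda>x. complex_of_real (dist (f x) y)) \<in> C_h0" for y
  proof -
    have "continuous_on UNIV (\<lambda>x. complex_of_real (dist (f x) y))"
      by (intro continuous_intros fc)
    moreover have "bounded (range (\<lambda>x. complex_of_real (dist (f x) y)))"
      unfolding bounded_iff
    proof (intro exI ballI)
      fix z assume "z \<in> range (\<lambda>x. complex_of_real (dist (f x) y))"
      then obtain x where z: "z = complex_of_real (dist (f x) y)" by auto
      have "dist (f x) y \<le> dist (f undefined) (f x) + dist (f undefined) y"
        by (metis dist_commute dist_triangle)
      also have "\<dots> \<le> B + dist (f undefined) y" using B fY by auto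
      finally show "norm z \<le> B + dist (f undefined) y" using z by simp
    qed
    moreover have "vanishes_at_infinity_on E (\<lambda>(x,y'). complex_of_real (dist (f x) y) - complex_of_real (dist (f y') y))"
      if E: "C0_controlled E" for E
      unfolding vanishes_at_infinity_on_def
    proof (intro allI impI)
      fix \<epsilon> :: real assume "\<epsilon> > 0"
      then obtain d where d: "d > 0" "\<And>x x'. dist x' x < d \<Longrightarrow> dist (f x') (f x) < \<epsilon>"
        using uc unfolding uniformly_continuous_on_def by blast
      obtain Kc where Kc: "compact Kc" "\<forall>(x,y)\<in>E - (Kc \<times> Kc). dist x y < d"
        using E d(1) unfolding C0_controlled_def by blast
      show "\<exists>C. compact C \<and> (\<forall>p\<in>E - C. norm ((\<lambda>(x,y'). complex_of_real (dist (f x) y) - complex_of_real (dist (f y') y)) p) < \<epsilon>)"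
      proof (intro exI conjI ballI)
        show "compact (Kc \<times> Kc)" by (intro compact_Times Kc(1))
        fix p assume p: "p \<in> E - Kc \<times> Kc"
        obtain a b where ab: "p = (a,b)" by force
        have "dist a b < d" using Kc(2) p ab by auto
        hence "dist (f b) (f a) < \<epsilon>" using d(2) by (metis dist_commute)
        moreover have "\<bar>dist (f a) y - dist (f b) y\<bar> \<le> dist (f b) (f a)"
          by (metis abs_le_iff dist_commute dist_triangle2 diff_le_eq minus_diff_eq)
        ultimately show "norm ((\<lambda>(x,y'). complex_of_real (dist (f x) y) - complex_of_real (dist (f y') y)) p) < \<epsilon>"
          using ab by (simp flip: of_real_diff)
      qed
    qed
    ultimately show ?thesis unfolding C_h0_def by auto
  qed
  define Hf where "Hf y = (SOME h. continuous_map K euclidean h \<and> (\<forall>x. h (e x) = complex_of_real (dist (f x) y)))" for y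
  have Hf: "continuous_map K euclidean (Hf y) \<and> (\<forall>x. Hf y (e x) = complex_of_real (dist (f x) y))" for y
  proof -
    obtain g where "continuous_map K euclidean g" "(\<lambda>x. complex_of_real (dist (f x) y)) = g \<circ> e"
      using inC[of y] Ch by blast
    hence "continuous_map K euclidean g \<and> (\<forall>x. g (e x) = complex_of_real (dist (f x) y))"
      by (metis comp_apply)
    thus ?thesis unfolding Hf_def by (rule someI[where x=g])
  qed
  define \<phi> where "\<phi> y k = Re (Hf y k)" for y k
  have \<phi>c: "continuous_map K euclidean (\<phi> y)" for y
  proof -
    have "continuous_map K euclidean (Re \<circ> Hf y)"
      by (rule continuous_map_compose[OF conjunct1[OF Hf[of y]]]) (simp add: continuous_on_Re continuous_on_id)
    thus ?thesis unfolding \<phi>_def by (simp add: o_def)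
  qed
  have \<phi>e: "\<phi> y (e x) = dist (f x) y" for x y
    using Hf[of y] unfolding \<phi>_def by simp
  have const: "continuous_map K euclidean (\<lambda>k. c::real)" for c by simp
  have L1: "\<phi> y k \<le> \<phi> y' k + dist y y'" if "k \<in> topspace K" for y y' k
    by (rule dense_le[of K "\<phi> y" "\<lambda>k. \<phi> y' k + dist y y'" e k, OF \<phi>c continuous_map_add[OF \<phi>c const] _ cl rg that])
      (simp add: \<phi>e dist_triangle2)
  have L2: "dist y y' \<le> \<phi> y k + \<phi> y' k" if "k \<in> topspace K" for y y' k
    by (rule dense_le[of K "\<lambda>k. dist y y'" "\<lambda>k. \<phi> y k + \<phi> y' k" e k, OF const continuous_map_add[OF \<phi>c \<phi>c] _ cl rg that])
      (simp add: \<phi>e dist_triangle3)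
  have L0: "0 \<le> \<phi> y k" if "k \<in> topspace K" for y k
    by (rule dense_le[of K "\<lambda>k. 0" "\<phi> y" e k, OF const \<phi>c _ cl rg that]) (simp add: \<phi>e)
  have L3: "\<exists>y\<in>Y. \<phi> y k < \<delta>" if k: "k \<in> topspace K" and "\<delta> > 0" for k \<delta>
  proof (rule ccontr)
    assume nk: "\<not> ?thesis"
    obtain T where T: "T \<subseteq> Y" "finite T" "Y \<subseteq> (\<Union>t\<in>T. ball t (\<delta>/2))"
      using compactE_image[OF Y, of Y "\<lambda>t. ball t (\<delta>/2)"] \<open>\<delta>>0\<close> by force
    define U where "U = (\<Inter>t\<in>T. {k \<in> topspace K. \<phi> t k \<in> {\<delta>/2<..}}) \<inter> topspace K"
    have op: "openin K U" unfolding U_def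
      by (intro openin_INT T(2) openin_continuous_map_preimage[OF \<phi>c]) auto
    have kU: "k \<in> U" unfolding U_def using nk T(1) k \<open>\<delta>>0\<close> by force
    have "k \<in> K closure_of range e" using cl k by simp
    then obtain z where z: "z \<in> range e" "z \<in> U" using op kU unfolding in_closure_of by blast
    then obtain x where x: "z = e x" by auto
    have "f x \<in> Y" using fY by auto
    then obtain t where t: "t \<in> T" "dist t (f x) < \<delta>/2" using T(3) by auto
    have "\<phi> t z > \<delta>/2" using z(2) t(1) unfolding U_def by auto
    thus False using t(2) x by (simp add: \<phi>e dist_commute)
  qed
  have ex: "\<exists>y0\<in>Y. \<forall>y. \<phi> y k = dist y0 y" if k: "k \<in> topspace K" for k
  proof -
    have "continuous_on Y (\<lambda>y. \<phi> y k)"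
      unfolding continuous_on_iff
    proof (intro ballI allI impI)
      fix y \<epsilon> assume "(\<epsilon>::real) > 0"
      show "\<exists>d>0. \<forall>x'\<in>Y. dist x' y < d \<longrightarrow> dist (\<phi> x' k) (\<phi> y k) < \<epsilon>"
      proof (intro exI[of _ \<epsilon>] conjI ballI impI)
        fix x' assume "dist x' y < \<epsilon>"
        moreover have "\<phi> x' k \<le> \<phi> y k + dist x' y" "\<phi> y k \<le> \<phi> x' k + dist y x'"
          using L1 k by auto
        ultimately show "dist (\<phi> x' k) (\<phi> y k) < \<epsilon>"
          by (simp add: dist_real_def dist_commute abs_less_iff)
      qed (use \<open>\<epsilon>>0\<close> in auto)
    qed
    moreover have "Y \<noteq> {}" using fY by auto
    ultimately obtain y0 where y0: "y0 \<in> Y" "\<And>y. y \<in> Y \<Longrightarrow> \<phi> y0 k \<le> \<phi> y k"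
      using continuous_attains_inf[OF Y] by blast
    have z: "\<phi> y0 k = 0"
    proof (rule ccontr)
      assume "\<phi> y0 k \<noteq> 0"
      hence "\<phi> y0 k > 0" using L0[OF k] by (simp add: order_le_neq_trans)
      then obtain y where "y \<in> Y" "\<phi> y k < \<phi> y0 k" using L3[OF k] by blast
      thus False using y0(2) by force
    qed
    have "\<phi> y k = dist y0 y" for y
      using L1[OF k, of y y0] L2[OF k, of y0 y] z by (simp add: dist_commute)
    thus ?thesis using y0(1) by blast
  qed
  define F where "F k = (SOME y0. y0 \<in> Y \<and> (\<forall>y. \<phi> y k = dist y0 y))" for k
  have F: "F k \<in> Y \<and> (\<forall>y. \<phi> y k = dist (F k) y)" if "k \<in> topspace K" for k
  proof -
    have "\<exists>y0. y0 \<in> Y \<and> (\<forall>y. \<phi> y k = dist y0 y)" using ex[OF that] by blast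
    from someI_ex[OF this] show ?thesis unfolding F_def .
  qed
  have Fe: "F (e x) = f x" for x
  proof -
    have "e x \<in> topspace K" using rg by auto
    from F[OF this] have "\<phi> (F (e x)) (e x) = 0" by simp
    thus ?thesis by (simp add: \<phi>e)
  qed
  have "continuous_map K (top_of_set Y) F"
    unfolding continuous_map_def
  proof (intro conjI allI impI)
    show "F \<in> topspace K \<rightarrow> topspace (top_of_set Y)" using F by auto
    fix U assume "openin (top_of_set Y) U"
    then obtain T where T: "open T" "U = T \<inter> Y" by (auto simp: openin_open)
    show "openin K {x \<in> topspace K. F x \<in> U}"
      unfolding openin_subopen[of K "{x \<in> topspace K. F x \<in> U}"]
    proof (intro ballI)
      fix k assume k: "k \<in> {x \<in> topspace K. F x \<in> U}"
      then obtain r where r: "r > 0" "ball (F k) r \<subseteq> T"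
        using T open_contains_ball by blast
      define W where "W = {k' \<in> topspace K. \<phi> (F k) k' \<in> {..<r}}"
      have "openin K W" unfolding W_def
        by (rule openin_continuous_map_preimage[OF \<phi>c]) auto
      moreover have "k \<in> W" using k F[of k] r(1) unfolding W_def by auto
      moreover have "W \<subseteq> {x \<in> topspace K. F x \<in> U}"
      proof
        fix k' assume "k' \<in> W"
        hence k': "k' \<in> topspace K" "\<phi> (F k) k' < r" unfolding W_def by auto
        hence "dist (F k) (F k') < r" using F[OF k'(1)] by (simp add: dist_commute)
        thus "k' \<in> {x \<in> topspace K. F x \<in> U}" using r(2) k' F[OF k'(1)] T(2) by auto
      qed
      ultimately show "\<exists>T. openin K T \<and> k \<in> T \<and> T \<subseteq> {x \<in> topspace K. F x \<in> U}" by blast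
    qed
  qed
  thus ?thesis using Fe by blast
qed



lemma forward:
  fixes K :: "'c topology" and e :: "'a::metric_space \<Rightarrow> 'c"
    and Y :: "'b::metric_space set" and f :: "'a \<Rightarrow> 'b"
  assumes H: "is_C0_Higson_compactification K e"
    and Y: "compact Y" and fY: "f ` UNIV \<subseteq> Y" and fc: "continuous_on UNIV f"
    and Fc: "continuous_map K (top_of_set Y) F" and Fe: "\<And>x. F (e x) = f x"
  shows "uniformly_continuous_on UNIV f"
proof (rule ccontr)
  have Ch: "{g \<circ> e | g. continuous_map K euclidean (g :: 'c \<Rightarrow> complex)} = C_h0"
    using H unfolding is_C0_Higson_compactification_def by auto
  assume "\<not> uniformly_continuous_on UNIV f"
  then obtain \<epsilon> where \<epsilon>: "\<epsilon> > 0" "\<And>d. d > 0 \<Longrightarrow> \<exists>x x'. dist x' x < d \<and> \<not> dist (f x') (f x) < \<epsilon>"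
    unfolding uniformly_continuous_on_def by auto
  have "\<forall>n. \<exists>x x'. dist x' x < inverse (real (Suc n)) \<and> \<not> dist (f x') (f x) < \<epsilon>"
    using \<epsilon>(2) by simp
  then obtain a0 b0 where ab0: "\<And>n. dist (a0 n) (b0 n) < inverse (real (Suc n))"
    "\<And>n. dist (f (a0 n)) (f (b0 n)) \<ge> \<epsilon>"
    by (metis dist_commute not_less)
  have "seq_compact Y" using Y by (rule compact_imp_seq_compact)
  moreover have "\<forall>n. (f \<circ> a0) n \<in> Y" using fY by auto
  ultimately obtain y r where y: "y \<in> Y" "strict_mono r" "(f \<circ> a0 \<circ> r) \<longlonglongrightarrow> y"
    unfolding seq_compact_def by blast
  define a where "a n = a0 (r n)" for n
  define b where "b n = b0 (r n)" for n
  have ab: "dist (a n) (b n) < inverse (real (Suc n))" for n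
  proof -
    have "inverse (real (Suc (r n))) \<le> inverse (real (Suc n))"
      using seq_suble[OF y(2), of n] by (simp add: field_simps)
    thus ?thesis using ab0(1)[of "r n"] unfolding a_def b_def by linarith
  qed
  have abf: "dist (f (a n)) (f (b n)) \<ge> \<epsilon>" for n unfolding a_def b_def by (rule ab0(2))
  have fa: "(\<lambda>n. f (a n)) \<longlonglongrightarrow> y" using y(3) unfolding a_def by (simp add: o_def)
  define g where "g z = complex_of_real (dist z y)" for z
  have "continuous_map K euclidean (g \<circ> F)"
    by (rule continuous_map_compose[OF Fc]) (simp add: g_def continuous_intros)
  hence "(g \<circ> F) \<circ> e \<in> C_h0" using Ch by blast
  moreover have "(g \<circ> F) \<circ> e = (\<lambda>x. g (f x))" using Fe by (auto simp: o_def)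
  ultimately have gC: "(\<lambda>x. g (f x)) \<in> C_h0" by simp
  define E where "E = range (\<lambda>n. (a n, b n))"
  have "C0_controlled E" unfolding C0_controlled_def
  proof (intro allI impI)
    fix \<delta> :: real assume "\<delta> > 0"
    then obtain N where N: "inverse (real (Suc N)) < \<delta>" using reals_Archimedean by blast
    define Kc where "Kc = a ` {..<N} \<union> b ` {..<N}"
    show "\<exists>K. compact K \<and> (\<forall>(x,y)\<in>E - (K \<times> K). dist x y < \<delta>)"
    proof (intro exI conjI)
      show "compact Kc" unfolding Kc_def by (intro finite_imp_compact) auto
      show "\<forall>(x,y)\<in>E - (Kc \<times> Kc). dist x y < \<delta>"
      proof
        fix p assume "p \<in> E - (Kc \<times> Kc)"
        then obtain n where n: "p = (a n, b n)" "\<not> n < N" unfolding E_def Kc_def by auto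
        have "inverse (real (Suc n)) \<le> inverse (real (Suc N))" using n(2) by (simp add: field_simps)
        hence "dist (a n) (b n) < \<delta>" using ab[of n] N by linarith
        thus "case p of (x,y) \<Rightarrow> dist x y < \<delta>" using n(1) by simp
      qed
    qed
  qed
  with gC have "vanishes_at_infinity_on E (\<lambda>(x,y). g (f x) - g (f y))" unfolding C_h0_def by auto
  then obtain C where C: "compact C" "\<And>p. p \<in> E - C \<Longrightarrow> norm ((\<lambda>(x,y). g (f x) - g (f y)) p) < \<epsilon>/2"
    unfolding vanishes_at_infinity_on_def using \<epsilon>(1) by (meson half_gt_zero)
  have "eventually (\<lambda>n. dist (f (a n)) y < \<epsilon>/4) sequentially"
    using fa \<epsilon>(1) by (intro tendstoD) auto
  then obtain N1 where N1: "\<And>n. n \<ge> N1 \<Longrightarrow> dist (f (a n)) y < \<epsilon>/4"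
    unfolding eventually_sequentially by blast
  have inC: "(a n, b n) \<in> C" if "n \<ge> N1" for n
  proof (rule ccontr)
    assume "(a n, b n) \<notin> C"
    hence "norm (g (f (a n)) - g (f (b n))) < \<epsilon>/2" using C(2)[of "(a n, b n)"] unfolding E_def by auto
    hence lt: "\<bar>dist (f (a n)) y - dist (f (b n)) y\<bar> < \<epsilon>/2" unfolding g_def by (simp flip: of_real_diff)
    have "dist (f (a n)) (f (b n)) \<le> dist (f (a n)) y + dist (f (b n)) y" by (rule dist_triangle2)
    thus False using lt N1[OF that] abf[of n] by linarith
  qed
  define s where "s n = (a (n + N1), b (n + N1))" for n
  have "seq_compact C" using C(1) by (rule compact_imp_seq_compact)
  moreover have "\<forall>n. s n \<in> C" using inC unfolding s_def by auto
  ultimately obtain pq r2 where pq: "strict_mono r2" "(s \<circ> r2) \<longlonglongrightarrow> pq"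
    unfolding seq_compact_def by blast
  define A where "A n = a (r2 n + N1)" for n
  define B where "B n = b (r2 n + N1)" for n
  have A: "A \<longlonglongrightarrow> fst pq" using tendsto_fst[OF pq(2)] unfolding A_def s_def by (simp add: o_def)
  have B: "B \<longlonglongrightarrow> snd pq" using tendsto_snd[OF pq(2)] unfolding B_def s_def by (simp add: o_def)
  have d0: "(\<lambda>n. dist (A n) (B n)) \<longlonglongrightarrow> 0"
  proof (rule Lim_null_comparison[OF _ LIMSEQ_inverse_real_of_nat])
    show "\<forall>\<^sub>F n in sequentially. norm (dist (A n) (B n)) \<le> inverse (real (Suc n))"
    proof (rule always_eventually, rule allI)
      fix n
      have "n \<le> r2 n + N1" using seq_suble[OF pq(1), of n] by simp
      hence "inverse (real (Suc (r2 n + N1))) \<le> inverse (real (Suc n))" by (simp add: field_simps)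
      moreover have "dist (A n) (B n) < inverse (real (Suc (r2 n + N1)))"
        using ab[of "r2 n + N1"] unfolding A_def B_def .
      moreover have "norm (dist (A n) (B n)) = dist (A n) (B n)" by simp
      ultimately show "norm (dist (A n) (B n)) \<le> inverse (real (Suc n))" by linarith
    qed
  qed
  have "(\<lambda>n. dist (A n) (B n)) \<longlonglongrightarrow> dist (fst pq) (snd pq)" by (intro tendsto_dist A B)
  with d0 have "dist (fst pq) (snd pq) = 0" using LIMSEQ_unique by metis
  hence eq: "fst pq = snd pq" by simp
  have fA: "(\<lambda>n. f (A n)) \<longlonglongrightarrow> f (fst pq)"
    using continuous_on_tendsto_compose[OF fc A] by simp
  have fB: "(\<lambda>n. f (B n)) \<longlonglongrightarrow> f (fst pq)"
    using continuous_on_tendsto_compose[OF fc B] eq by simp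
  have "(\<lambda>n. dist (f (A n)) (f (B n))) \<longlonglongrightarrow> dist (f (fst pq)) (f (fst pq))"
    by (intro tendsto_dist fA fB)
  hence "eventually (\<lambda>n. dist (f (A n)) (f (B n)) < \<epsilon>) sequentially"
    using \<epsilon>(1) by (intro order_tendstoD(2)) auto
  then obtain N2 where "dist (f (A N2)) (f (B N2)) < \<epsilon>"
    unfolding eventually_sequentially by blast
  thus False using abf[of "r2 N2 + N1"] unfolding A_def B_def by simp
qed

theorem corollary3p5:
  fixes K :: "'c topology" and e :: "'a::metric_space \<Rightarrow> 'c"
    and Y :: "'b::metric_space set" and f :: "'a \<Rightarrow> 'b"
  assumes "proper_metric TYPE('a)" and "geodesic_metric TYPE('a)"
    and "is_C0_Higson_compactification K e"
    and "compact Y" and "f ` UNIV \<subseteq> Y" and "continuous_on UNIV f"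
  shows "(\<exists>F. continuous_map K (top_of_set Y) F \<and> (\<forall>x. F (e x) = f x))
         \<longleftrightarrow> uniformly_continuous_on UNIV f"
    using backward[OF assms(3-6)] forward[OF assms(3-6)] by blast

end
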